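(* Let $(T_1,T_2,T_3)$ be an associative Clifford extension over $(V,S^0,S^1)$ with $\dim V>1$ and $\dim S^0\ge4$. Then there exist pairwise orthogonal nonzero vectors $e_1,e_2,e_3,e_4\in S^0$ such that $e_1(e_2t)=e_3(e_4t)$ for all $t\in T_2$, i.e. the elements $e_1e_2,e_3e_4\in\mathrm{Cl}(S^0)$ act identically on $T_2$.
   Context: All spaces are finite-dimensional real Euclidean. For a Euclidean space $X$, $\mathrm{Cl}(X)$ is the Clifford algebra with $x\cdot x=-|x|^2$; a "$\mathrm{Cl}(X)$-module $Y\oplus Z$" is a $\mathbb Z/2$-graded module with $X\cdot Y\subset Z$, $X\cdot Z\subset Y$, $Y\perp Z$, each $x\in X$ acting skew-symmetrically; the action is written $xy$. Let $V\neq0$ be Euclidean and $S^0\oplus S^1$ a nonzero $\mathrm{Cl}(V)$-module. A Clifford extension over $(V,S^0,S^1)$ is a triple of Euclidean spaces $T_1,T_2,T_3$ of equal dimension together with a $\mathrm{Cl}(V)$-module structure on $T_2\oplus T_3$, a $\mathrm{Cl}(S^0)$-module structure on $T_1\oplus T_2$, and a $\mathrm{Cl}(S^1)$-module structure on $T_1\oplus T_3$. It is associative if $(vs^0)t_1=v(s^0t_1)$ for all $v\in V,s^0\in S^0,t_1\in T_1$. *)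

theory Defs
  imports "HOL-Analysis.Analysis"
begin

text \<open>A Z/2-graded Cl(X)-module Y (+) Z (Y, Z orthogonal summands, realised as separate
  Euclidean types).
  Conditions: the action is bilinear (Cl(X) is an algebra acting linearly),
  x.x = -|x|^2 (Clifford relation), and each x acts skew-symmetrically on Y (+) Z,
  which for the graded action amounts to <x y, z> = - <y, x z>.\<close>

definition clifford_module ::
  "('x::euclidean_space \<Rightarrow> 'y::euclidean_space \<Rightarrow> 'z::euclidean_space)
   \<Rightarrow> ('x \<Rightarrow> 'z \<Rightarrow> 'y) \<Rightarrow> bool" where
  "clifford_module act act' \<longleftrightarrow>
     bilinear act \<and> bilinear act' \<and>
     (\<forall>x y. act' x (act x y) = - ((norm x)\<^sup>2 *\<^sub>R y)) \<and>
     (\<forall>x z. act x (act' x z) = - ((norm x)\<^sup>2 *\<^sub>R z)) \<and>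
     (\<forall>x y z. inner (act x y) z = - inner y (act' x z))"

text \<open>Clifford extension over (V, S0, S1): the Cl(V)-module S0 (+) S1 is given by (vS0, vS1);
  the Cl(V)-module T2 (+) T3 by (vT2, vT3); the Cl(S0)-module T1 (+) T2 by (s0T1, s0T2);
  the Cl(S1)-module T1 (+) T3 by (s1T1, s1T3).\<close>

definition clifford_extension ::
  "('v::euclidean_space \<Rightarrow> 's0::euclidean_space \<Rightarrow> 's1::euclidean_space)
   \<Rightarrow> ('v \<Rightarrow> 's1 \<Rightarrow> 's0)
   \<Rightarrow> ('v \<Rightarrow> 't2::euclidean_space \<Rightarrow> 't3::euclidean_space) \<Rightarrow> ('v \<Rightarrow> 't3 \<Rightarrow> 't2)
   \<Rightarrow> ('s0 \<Rightarrow> 't1::euclidean_space \<Rightarrow> 't2) \<Rightarrow> ('s0 \<Rightarrow> 't2 \<Rightarrow> 't1)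
   \<Rightarrow> ('s1 \<Rightarrow> 't1 \<Rightarrow> 't3) \<Rightarrow> ('s1 \<Rightarrow> 't3 \<Rightarrow> 't1) \<Rightarrow> bool" where
  "clifford_extension vS0 vS1 vT2 vT3 s0T1 s0T2 s1T1 s1T3 \<longleftrightarrow>
     clifford_module vS0 vS1 \<and>
     DIM('t1) = DIM('t2) \<and> DIM('t2) = DIM('t3) \<and>
     clifford_module vT2 vT3 \<and>
     clifford_module s0T1 s0T2 \<and>
     clifford_module s1T1 s1T3"

definition associative_extension ::
  "('v::euclidean_space \<Rightarrow> 's0::euclidean_space \<Rightarrow> 's1::euclidean_space)
   \<Rightarrow> ('v \<Rightarrow> 't2::euclidean_space \<Rightarrow> 't3::euclidean_space)
   \<Rightarrow> ('s0 \<Rightarrow> 't1::euclidean_space \<Rightarrow> 't2)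
   \<Rightarrow> ('s1 \<Rightarrow> 't1 \<Rightarrow> 't3) \<Rightarrow> bool" where
  "associative_extension vS0 vT2 s0T1 s1T1 \<longleftrightarrow>
     (\<forall>v s t. s1T1 (vS0 v s) t = vT2 v (s0T1 s t))"

end

theory Submission
  imports Defs
begin

lemma cm_facts:
  assumes "clifford_module act act'"
  shows "bilinear act" "bilinear act'"
    "\<And>x y. act' x (act x y) = - ((norm x)\<^sup>2 *\<^sub>R y)"
    "\<And>x z. act x (act' x z) = - ((norm x)\<^sup>2 *\<^sub>R z)"
    "\<And>x y z. inner (act x y) z = - inner y (act' x z)"
  using assms unfolding clifford_module_def by auto

lemma cm_anti:
  assumes "clifford_module act act'"
  shows "act x (act' y z) + act y (act' x z) = - ((2 * inner x y) *\<^sub>R z)"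
proof -
  note f = cm_facts[OF assms]
  have "act (x+y) (act' (x+y) z) = act x (act' x z) + act x (act' y z) + act y (act' x z) + act y (act' y z)"
    using f(1,2) by (simp add: bilinear_ladd bilinear_radd)
  moreover have "act (x+y) (act' (x+y) z) = - ((norm (x+y))\<^sup>2 *\<^sub>R z)" using f(4) .
  moreover have "(norm (x+y))\<^sup>2 = (norm x)\<^sup>2 + 2 * inner x y + (norm y)\<^sup>2"
    by (simp add: power2_norm_eq_inner inner_add inner_commute)
  ultimately show ?thesis using f(4)[of x z] f(4)[of y z]
    by (simp add: algebra_simps)
qed

lemma cm_isom1:
  assumes "clifford_module act act'"
  shows "inner (act x y) (act x y') = (norm x)\<^sup>2 * inner y y'"
proof -
  note f = cm_facts[OF assms]
  have "inner (act x y) (act x y') = - inner y (act' x (act x y'))" using f(5) .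
  also have "\<dots> = (norm x)\<^sup>2 * inner y y'" using f(3) by simp
  finally show ?thesis .
qed

lemma cm_isom2:
  assumes "clifford_module act act'"
  shows "inner (act' x z) (act' x z') = (norm x)\<^sup>2 * inner z z'"
proof -
  note f = cm_facts[OF assms]
  have "inner (act x (act' x z)) z' = - inner (act' x z) (act' x z')" using f(5) .
  then show ?thesis using f(4) by simp
qed

lemma cm_polar:
  assumes "clifford_module act act'"
  shows "inner (act x y) (act w y) = inner x w * (norm y)\<^sup>2"
proof -
  note f = cm_facts[OF assms]
  have "inner (act (x+w) y) (act (x+w) y) = (norm (x+w))\<^sup>2 * inner y y"
    by (rule cm_isom1[OF assms])
  moreover have "inner (act (x+w) y) (act (x+w) y) = inner (act x y) (act x y) + 2 * inner (act x y) (act w y) + inner (act w y) (act w y)"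
    using f(1) by (simp add: bilinear_ladd inner_add inner_commute)
  moreover have "(norm (x+w))\<^sup>2 = (norm x)\<^sup>2 + 2 * inner x w + (norm w)\<^sup>2"
    by (simp add: power2_norm_eq_inner inner_add inner_commute)
  ultimately show ?thesis using cm_isom1[OF assms, of x y y] cm_isom1[OF assms, of w y y]
    by (simp add: algebra_simps power2_norm_eq_inner)
qed

lemma cm_polar2:
  assumes "clifford_module act act'" "inner x w = 0"
  shows "inner (act x a) (act w b) + inner (act x b) (act w a) = 0"
proof -
  note f = cm_facts[OF assms(1)]
  have "inner (act x (a+b)) (act w (a+b)) = 0" using cm_polar[OF assms(1)] assms(2) by simp
  moreover have "inner (act x (a+b)) (act w (a+b)) = inner (act x a) (act w a) + inner (act x a) (act w b) + inner (act x b) (act w a) + inner (act x b) (act w b)"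
    using f(1) by (simp add: bilinear_radd inner_add)
  ultimately show ?thesis using cm_polar[OF assms(1), of x a w] cm_polar[OF assms(1), of x b w] assms(2)
    by simp
qed

theorem mainTheorem8:
  fixes vS0 :: "'v::euclidean_space \<Rightarrow> 's0::euclidean_space \<Rightarrow> 's1::euclidean_space"
    and vS1 :: "'v \<Rightarrow> 's1 \<Rightarrow> 's0"
    and vT2 :: "'v \<Rightarrow> 't2::euclidean_space \<Rightarrow> 't3::euclidean_space"
    and vT3 :: "'v \<Rightarrow> 't3 \<Rightarrow> 't2"
    and s0T1 :: "'s0 \<Rightarrow> 't1::euclidean_space \<Rightarrow> 't2"
    and s0T2 :: "'s0 \<Rightarrow> 't2 \<Rightarrow> 't1"
    and s1T1 :: "'s1 \<Rightarrow> 't1 \<Rightarrow> 't3"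
    and s1T3 :: "'s1 \<Rightarrow> 't3 \<Rightarrow> 't1"
  assumes "clifford_extension vS0 vS1 vT2 vT3 s0T1 s0T2 s1T1 s1T3"
    and "associative_extension vS0 vT2 s0T1 s1T1"
    and "DIM('v) > 1"
    and "DIM('s0) \<ge> 4"
  shows "\<exists>e1 e2 e3 e4 :: 's0.
           e1 \<noteq> 0 \<and> e2 \<noteq> 0 \<and> e3 \<noteq> 0 \<and> e4 \<noteq> 0 \<and>
           inner e1 e2 = 0 \<and> inner e1 e3 = 0 \<and> inner e1 e4 = 0 \<and>
           inner e2 e3 = 0 \<and> inner e2 e4 = 0 \<and> inner e3 e4 = 0 \<and>
           (\<forall>t :: 't2. s0T1 e1 (s0T2 e2 t) = s0T1 e3 (s0T2 e4 t))"
proof -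
  have MS: "clifford_module vS0 vS1" and MT: "clifford_module vT2 vT3"
    and M0: "clifford_module s0T1 s0T2" and M1: "clifford_module s1T1 s1T3"
    using assms(1) unfolding clifford_extension_def by auto
  have assoc: "\<And>v s t. s1T1 (vS0 v s) t = vT2 v (s0T1 s t)"
    using assms(2) unfolding associative_extension_def by auto
  note fS = cm_facts[OF MS] and fT = cm_facts[OF MT] and f0 = cm_facts[OF M0] and f1 = cm_facts[OF M1]
  have B: "vT3 v (s1T1 \<sigma> t) = s0T1 (vS1 v \<sigma>) t" for v \<sigma> t
  proof (cases "v = 0")
    case True
    then show ?thesis using fT(2) f0(1) fS(2) by (simp add: bilinear_lzero)
  next
    case False
    hence n: "(norm v)\<^sup>2 \<noteq> 0" by simp
    define s where "s = (- 1 / (norm v)\<^sup>2) *\<^sub>R vS1 v \<sigma>"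
    have "vS0 v s = \<sigma>" unfolding s_def using fS(1) fS(4)[of v \<sigma>] n
      by (simp add: bilinear_rmul bilinear_rneg)
    hence "s1T1 \<sigma> t = vT2 v (s0T1 s t)" using assoc by metis
    hence "vT3 v (s1T1 \<sigma> t) = - ((norm v)\<^sup>2 *\<^sub>R s0T1 s t)" using fT(3) by simp
    also have "\<dots> = s0T1 (- ((norm v)\<^sup>2 *\<^sub>R s)) t" using f0(1) by (simp add: bilinear_lmul bilinear_lneg)
    also have "- ((norm v)\<^sup>2 *\<^sub>R s) = vS1 v \<sigma>" unfolding s_def using n by simp
    finally show ?thesis .
  qed
  have "1 < card (Basis :: 'v set)" using assms(3) by simp
  then obtain v w :: 'v where vw: "v \<in> Basis" "w \<in> Basis" "v \<noteq> w"
    using card_le_Suc0_iff_eq[of "Basis :: 'v set"] by (metis One_nat_def finite_Basis not_le)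
  have nv: "norm v = 1" "norm w = 1" "inner v w = 0" using vw by (auto simp: inner_not_same_Basis)
  define J where "J s = vS1 v (vS0 w s)" for s
  define K where "K t = vT3 v (vT2 w t)" for t
  have Jskew: "inner (J a) b = - inner a (J b)" for a b
  proof -
    have "inner (J a) b = - inner (vS0 v b) (vS0 w a)"
      unfolding J_def using fS(5)[of v b "vS0 w a"] by (simp add: inner_commute)
    moreover have "inner a (J b) = - inner (vS0 v a) (vS0 w b)"
      unfolding J_def using fS(5)[of v a "vS0 w b"] by simp
    ultimately show ?thesis using cm_polar2[OF MS nv(3), of b a] by simp
  qed
  have Jorth: "inner (J a) (J b) = inner a b" for a b
    unfolding J_def using cm_isom2[OF MS, of v] cm_isom1[OF MS, of w] nv by simp
  have JKrel: "K (s0T1 s t1) = s0T1 (J s) t1" for s t1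
    unfolding K_def J_def using assoc[of w s t1, symmetric] B by simp
  have key: "s0T1 s (s0T2 (J s) t) = (norm s)\<^sup>2 *\<^sub>R K t" for s t
  proof -
    have sJ: "inner s (J s) = 0" using Jskew[of s s] by (simp add: inner_commute)
    have "K (s0T1 s (s0T2 s t)) = s0T1 (J s) (s0T2 s t)" by (rule JKrel)
    hence "s0T1 (J s) (s0T2 s t) = - ((norm s)\<^sup>2 *\<^sub>R K t)"
      unfolding K_def using f0(4) fT(1,2) by (simp add: bilinear_rmul bilinear_rneg)
    moreover have "s0T1 s (s0T2 (J s) t) + s0T1 (J s) (s0T2 s t) = 0"
      using cm_anti[OF M0, of s "J s" t] sJ by simp
    ultimately show ?thesis by (simp add: add_eq_0_iff)
  qed
  obtain s :: 's0 where s: "s \<in> Basis" using nonempty_Basis by blast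
  have ns: "norm s = 1" using s by simp
  have "dim {s, J s} \<le> card {s, J s}" by (rule dim_le_card') simp
  also have "\<dots> \<le> 2" by (simp add: card_insert_le_m1)
  finally have "dim {s, J s} < DIM('s0)" using assms(4) by simp
  then obtain y :: 's0 where y: "y \<noteq> 0" "\<And>z. z \<in> span {s, J s} \<Longrightarrow> orthogonal y z"
    using orthogonal_to_subspace_exists by blast
  define s' where "s' = (1 / norm y) *\<^sub>R y"
  have ns': "norm s' = 1" unfolding s'_def using y by simp
  have o1: "inner s' s = 0" "inner s' (J s) = 0"
    unfolding s'_def using y(2)[of s] y(2)[of "J s"] by (auto simp: orthogonal_def span_base)
  have nJ: "norm (J a) = norm a" for a
    using Jorth[of a a] by (simp add: norm_eq_sqrt_inner)
  have sJs: "inner s (J s) = 0" "inner s' (J s') = 0"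
    using Jskew[of s s] Jskew[of s' s'] by (auto simp: inner_commute)
  show ?thesis
  proof (intro exI conjI allI)
    show "s \<noteq> 0" using ns by auto
    show "J s \<noteq> 0" using ns nJ[of s] by auto
    show "s' \<noteq> 0" using ns' by auto
    show "J s' \<noteq> 0" using ns' nJ[of s'] by auto
    show "inner s (J s) = 0" by (rule sJs(1))
    show "inner s s' = 0" using o1 by (simp add: inner_commute)
    show "inner s (J s') = 0" using Jskew[of s' s] o1 by (simp add: inner_commute)
    show "inner (J s) s' = 0" using o1 by (simp add: inner_commute)
    show "inner (J s) (J s') = 0" using Jorth[of s s'] o1 by (simp add: inner_commute)
    show "inner s' (J s') = 0" by (rule sJs(2))
    fix t show "s0T1 s (s0T2 (J s) t) = s0T1 s' (s0T2 (J s') t)"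
      using key[of s t] key[of s' t] ns ns' by simp
  qed
qed

end
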